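(* Let $k_0\in\mathbb{R}\setminus\{0\}$ and let $z\in C^2([-1,1])$ be a complex-valued function with $z(x)\neq0$ for all $x\in[-1,1]$ satisfying $$z(\pm1)=1,\qquad z'(\pm1)=\pm ik_0,\qquad \int_{-1}^{1}z^2(x)\,dx=\frac{1}{ik_0}.$$ Define $U(x)=\dfrac{z''(x)+k_0^2z(x)}{z(x)}$ for $|x|<1$ and $U(x)=0$ for $|x|\ge1$, and let $\psi(x)=z(x)$ for $|x|\le 1$, $\psi(x)=e^{ik_0(|x|-1)}$ for $|x|\ge1$. Then $\psi$ is a nontrivial solution of $-\psi''+U\psi=k_0^2\psi$ on $|x|<1$ with $\psi=\alpha_\pm e^{ik_0|x|}$ for $\pm x\ge1$ (here $\alpha_\pm=e^{-ik_0}$), and there exist constants $\beta_\pm\in\mathbb{C}$ and $\phi\in C^1(\mathbb{R})$ with $$-\phi''+U(x)\phi-k_0^2\phi=2k_0\psi\quad(|x|<1),\qquad \phi(x)=\big(i\alpha_\pm|x|+\beta_\pm\big)e^{ik_0|x|}\quad(\pm x\ge1).$$ That is, $U$ has a spectral singularity of the second order at $k=k_0$.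
   Context: A spectral singularity at real $k_0\neq0$ of $-\frac{d^2}{dx^2}+U(x)$ (with $U$ vanishing outside $[-1,1]$) means that $-\psi''+U\psi=k_0^2\psi$, $\psi=\alpha_\pm e^{ik_0|x|}$ for $\pm x\ge1$, has a nontrivial $C^1$ solution; it is of the second order when, in addition, the inhomogeneous problem for $\phi$ stated in the claim has a $C^1(\mathbb{R})$ solution. *)

theory Defs
  imports "HOL-Analysis.Analysis"
begin

definition spectral_singularity_solution ::
  "(real \<Rightarrow> complex) \<Rightarrow> real \<Rightarrow> (real \<Rightarrow> complex) \<Rightarrow> complex \<Rightarrow> complex \<Rightarrow> bool" where
  "spectral_singularity_solution U k0 \<psi> ap am \<longleftrightarrow>
     (\<exists>\<psi>1 \<psi>2.
        (\<forall>x. (\<psi> has_vector_derivative \<psi>1 x) (at x)) \<and> continuous_on UNIV \<psi>1 \<and>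
        (\<forall>x\<in>{-1<..<1}. (\<psi>1 has_vector_derivative \<psi>2 x) (at x) \<and>
            - \<psi>2 x + U x * \<psi> x = (complex_of_real k0)^2 * \<psi> x) \<and>
        (\<forall>x\<ge>1. \<psi> x = ap * exp (\<i> * complex_of_real k0 * complex_of_real \<bar>x\<bar>)) \<and>
        (\<forall>x\<le>-1. \<psi> x = am * exp (\<i> * complex_of_real k0 * complex_of_real \<bar>x\<bar>))) \<and>
     (\<exists>x. \<psi> x \<noteq> 0)"

definition second_order_condition ::
  "(real \<Rightarrow> complex) \<Rightarrow> real \<Rightarrow> (real \<Rightarrow> complex) \<Rightarrow> complex \<Rightarrow> complex \<Rightarrow> bool" where
  "second_order_condition U k0 \<psi> ap am \<longleftrightarrow>
     (\<exists>bp bm \<phi> \<phi>1 \<phi>2.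
        (\<forall>x. (\<phi> has_vector_derivative \<phi>1 x) (at x)) \<and> continuous_on UNIV \<phi>1 \<and>
        (\<forall>x\<in>{-1<..<1}. (\<phi>1 has_vector_derivative \<phi>2 x) (at x) \<and>
            - \<phi>2 x + U x * \<phi> x - (complex_of_real k0)^2 * \<phi> x
              = 2 * complex_of_real k0 * \<psi> x) \<and>
        (\<forall>x\<ge>1. \<phi> x = (\<i> * ap * complex_of_real \<bar>x\<bar> + bp)
                       * exp (\<i> * complex_of_real k0 * complex_of_real \<bar>x\<bar>)) \<and>
        (\<forall>x\<le>-1. \<phi> x = (\<i> * am * complex_of_real \<bar>x\<bar> + bm)
                       * exp (\<i> * complex_of_real k0 * complex_of_real \<bar>x\<bar>)))"

end

theory Submission imports Defs begin
lemma glue3: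
  fixes g g' hm hm' hp hp' :: "real \<Rightarrow> complex"
  assumes hm: "\<And>x. (hm has_vector_derivative hm' x) (at x)"
  and hp: "\<And>x. (hp has_vector_derivative hp' x) (at x)"
  and g: "\<And>x. x \<in> {-1..1} \<Longrightarrow> (g has_vector_derivative g' x) (at x within {-1..1})"
  and c1: "hm (-1) = g (-1)" and c2: "hm' (-1) = g' (-1)"
  and c3: "g 1 = hp 1" and c4: "g' 1 = hp' 1"
  shows "((\<lambda>x. if x \<le> -1 then hm x else if x \<le> 1 then g x else hp x) has_vector_derivative
          (if x \<le> -1 then hm' x else if x \<le> 1 then g' x else hp' x)) (at x)"
proof -
  define m where "m = (\<lambda>x. if x \<in> {..-1} then hm x else g x)"
  define m' where "m' = (\<lambda>x. if x \<in> {..-1} then hm' x else g' x)"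
  have e1: "closure {..(-1::real)} \<inter> closure {-1<..1} = {-1}" by auto
  have e2: "{..(-1::real)} \<union> {-1} = {..-1}" by auto
  have e3: "{-1<..(1::real)} \<union> {-1} = {-1..1}" by auto
  have M: "(m has_vector_derivative m' y) (at y within {..1})" if "y \<le> 1" for y
    unfolding m_def m'_def
    apply (rule has_vector_derivative_If_within_closures[where T="{-1<..1}"])
    using that apply auto[2]
    unfolding e1 e2 e3
    using hm has_vector_derivative_at_within apply blast
    using g apply blast
    using c1 c2 by auto
  have e4: "closure {..(1::real)} \<inter> closure {1<..} = {1}" by auto
  have e5: "{..(1::real)} \<union> {1} = {..1}" by auto
  have e6: "{1<..} \<union> {(1::real)} = {1..}" by auto
  have "((\<lambda>x. if x \<in> {..1} then m x else hp x) has_vector_derivative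
          (if x \<in> {..1} then m' x else hp' x)) (at x within UNIV)"
    apply (rule has_vector_derivative_If_within_closures[where T="{1<..}"])
    apply auto[2]
    unfolding e4 e5 e6
    using M apply blast
    using hp has_vector_derivative_at_within apply blast
    using c3 c4 by (auto simp: m_def m'_def)
  moreover have "(\<lambda>x. if x \<in> {..1} then m x else hp x) = (\<lambda>x. if x \<le> -1 then hm x else if x \<le> 1 then g x else hp x)"
    by (auto simp: m_def fun_eq_iff)
  moreover have "(if x \<in> {..1} then m' x else hp' x) = (if x \<le> -1 then hm' x else if x \<le> 1 then g' x else hp' x)"
    by (auto simp: m'_def)
  ultimately show ?thesis by simp
qed
definition E :: "complex \<Rightarrow> complex \<Rightarrow> complex \<Rightarrow> complex \<Rightarrow> real \<Rightarrow> complex" where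
  "E c d a b x = (c * complex_of_real x + d) * exp (a * complex_of_real x + b)"
definition E' :: "complex \<Rightarrow> complex \<Rightarrow> complex \<Rightarrow> complex \<Rightarrow> real \<Rightarrow> complex" where
  "E' c d a b x = c * exp (a * complex_of_real x + b)
     + (c * complex_of_real x + d) * (a * exp (a * complex_of_real x + b))"

lemma dE: "(E c d a b has_vector_derivative E' c d a b x) (at x)"
  unfolding E_def E'_def
  by (rule has_vector_derivative_real_field) (auto intro!: derivative_eq_intros)

lemma cE': "continuous_on UNIV (E' c d a b)"
  unfolding E'_def by (intro continuous_intros)

lemma dinv:
  fixes f :: "real \<Rightarrow> complex"
  assumes "(f has_vector_derivative f') (at x within S)" "f x \<noteq> 0"
  shows "((\<lambda>x. inverse (f x)) has_vector_derivative (f' * (- (inverse (f x) ^ 2)))) (at x within S)"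
proof -
  have "((inverse \<circ> f) has_vector_derivative (f' * (- (inverse (f x) ^ Suc (Suc 0))))) (at x within S)"
    by (rule field_vector_diff_chain_within[OF assms(1) DERIV_inverse[OF assms(2)]])
  then show ?thesis by (simp add: o_def power2_eq_square)
qed

lemma cont3:
  fixes g' hm' hp' :: "real \<Rightarrow> complex"
  assumes "continuous_on UNIV hm'" "continuous_on UNIV hp'" "continuous_on {-1..1} g'"
    "hm' (-1) = g' (-1)" "g' 1 = hp' 1"
  shows "continuous_on UNIV (\<lambda>x. if x \<le> -1 then hm' x else if x \<le> 1 then g' x else hp' x)"
proof -
  have "continuous_on ({-1..1} \<union> {1..}) (\<lambda>x. if x \<le> 1 then g' x else hp' x)"
    by (rule continuous_on_cases) (use assms continuous_on_subset in auto)
  moreover have "{-1..1} \<union> {1..} = {-1::real..}" by auto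
  ultimately have m: "continuous_on {-1..} (\<lambda>x. if x \<le> 1 then g' x else hp' x)" by simp
  have "continuous_on ({..-1} \<union> {-1..}) (\<lambda>x. if x \<le> -1 then hm' x else if x \<le> 1 then g' x else hp' x)"
    by (rule continuous_on_cases) (use assms m continuous_on_subset in auto)
  moreover have "{..-1} \<union> {-1..} = (UNIV::real set)" by auto
  ultimately show ?thesis by simp
qed

lemma inner_to_at:
  fixes f F :: "real \<Rightarrow> complex"
  assumes "(f has_vector_derivative f') (at x within {-1..1})" "x \<in> {-1<..<1}"
    "\<And>y. y \<in> {-1<..<1} \<Longrightarrow> f y = F y"
  shows "(F has_vector_derivative f') (at x)"
proof -
  have "(f has_vector_derivative f') (at x)"
    using assms(1,2) at_within_interior[of x "{-1..1::real}"] by simp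
  then show ?thesis
    by (rule has_vector_derivative_transform_within_open[where S="{-1<..<1}"]) (use assms in auto)
qed

lemma cont_of_der:
  fixes f :: "real \<Rightarrow> complex"
  assumes "\<forall>x\<in>S. (f has_vector_derivative f' x) (at x within S)"
  shows "continuous_on S f"
  using assms has_vector_derivative_continuous continuous_on_eq_continuous_within by blast

theorem mainTheorem3:
  fixes k0 :: real and z z1 z2 :: "real \<Rightarrow> complex"
    and U \<psi> :: "real \<Rightarrow> complex"
  assumes k0: "k0 \<noteq> 0"
    and dz: "\<forall>x\<in>{-1..1}. (z has_vector_derivative z1 x) (at x within {-1..1})"
    and dz1: "\<forall>x\<in>{-1..1}. (z1 has_vector_derivative z2 x) (at x within {-1..1})"
    and cz2: "continuous_on {-1..1} z2"
    and nz: "\<forall>x\<in>{-1..1}. z x \<noteq> 0"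
    and zp: "z 1 = 1" and zm: "z (-1) = 1"
    and z1p: "z1 1 = \<i> * complex_of_real k0" and z1m: "z1 (-1) = - \<i> * complex_of_real k0"
    and int: "integral {-1..1} (\<lambda>x. (z x)^2) = 1 / (\<i> * complex_of_real k0)"
    and U_def: "U \<equiv> (\<lambda>x. if \<bar>x\<bar> < 1
                    then (z2 x + (complex_of_real k0)^2 * z x) / z x else 0)"
    and \<psi>_def: "\<psi> \<equiv> (\<lambda>x. if \<bar>x\<bar> \<le> 1 then z x
                    else exp (\<i> * complex_of_real k0 * complex_of_real (\<bar>x\<bar> - 1)))"
  shows "spectral_singularity_solution U k0 \<psi> (exp (- \<i> * complex_of_real k0))
                                              (exp (- \<i> * complex_of_real k0)) \<and>
         second_order_condition U k0 \<psi> (exp (- \<i> * complex_of_real k0))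
                                         (exp (- \<i> * complex_of_real k0))"
proof -
  have exp_swap: "\<And>a b::complex. exp (- a - b) = exp (- b - a)" by (metis diff_minus_eq_add minus_diff_eq add.commute diff_conv_add_uminus)
  define K where "K = complex_of_real k0"
  have K0: "K \<noteq> 0" using k0 by (simp add: K_def)
  define \<alpha> where "\<alpha> = exp (- \<i> * K)"
  have ae: "\<alpha> * exp (\<i> * K) = 1" unfolding \<alpha>_def by (simp add: exp_add[symmetric])
  have zc: "continuous_on {-1..1} z" using dz by (rule cont_of_der)
  have z1c: "continuous_on {-1..1} z1" using dz1 by (rule cont_of_der)
  define psm where "psm = E 0 1 (- \<i> * K) (- \<i> * K)"
  define psp where "psp = E 0 1 (\<i> * K) (- \<i> * K)"
  define psm' where "psm' = E' 0 1 (- \<i> * K) (- \<i> * K)"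
  define psp' where "psp' = E' 0 1 (\<i> * K) (- \<i> * K)"
  define \<psi>1 where "\<psi>1 = (\<lambda>x. if x \<le> -1 then psm' x else if x \<le> 1 then z1 x else psp' x)"
  have psi_eq: "\<psi> = (\<lambda>x. if x \<le> -1 then psm x else if x \<le> 1 then z x else psp x)"
  proof
    fix x
    show "\<psi> x = (if x \<le> -1 then psm x else if x \<le> 1 then z x else psp x)"
      unfolding \<psi>_def psm_def psp_def E_def
      using zm by (cases "x = -1"; cases "x \<le> -1"; cases "x \<le> 1") (auto simp: algebra_simps K_def exp_swap)
  qed
  have dpsi: "(\<psi> has_vector_derivative \<psi>1 x) (at x)" for x
    unfolding psi_eq \<psi>1_def
    apply (rule glue3)
    unfolding psm_def psp_def psm'_def psp'_def
    apply (rule dE) apply (rule dE) using dz apply blast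
    using zm zp z1m z1p by (auto simp: E_def E'_def K_def)
  have cpsi1: "continuous_on UNIV \<psi>1"
    unfolding \<psi>1_def psm'_def psp'_def
    apply (rule cont3) apply (rule cE') apply (rule cE')
    using z1c z1m z1p by (auto simp: E'_def K_def)
  have ode1: "(\<psi>1 has_vector_derivative z2 x) (at x) \<and> - z2 x + U x * \<psi> x = K^2 * \<psi> x"
    if x: "x \<in> {-1<..<1}" for x
  proof
    show "(\<psi>1 has_vector_derivative z2 x) (at x)"
      by (rule inner_to_at[where f=z1]) (use x dz1 in \<open>auto simp: \<psi>1_def\<close>)
    have "z x \<noteq> 0" using nz x by auto
    then show "- z2 x + U x * \<psi> x = K^2 * \<psi> x"
      using x by (auto simp: U_def \<psi>_def K_def field_simps)
  qed
  have part1: "spectral_singularity_solution U k0 \<psi> \<alpha> \<alpha>"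
    unfolding spectral_singularity_solution_def
  proof (intro conjI exI)
    show "\<forall>x. (\<psi> has_vector_derivative \<psi>1 x) (at x)" using dpsi by blast
    show "continuous_on UNIV \<psi>1" by (rule cpsi1)
    show "\<forall>x\<in>{-1<..<1}. (\<psi>1 has_vector_derivative z2 x) (at x) \<and> - z2 x + U x * \<psi> x = (complex_of_real k0)\<^sup>2 * \<psi> x"
      using ode1 by (simp add: K_def)
    show "\<forall>x\<ge>1. \<psi> x = \<alpha> * exp (\<i> * complex_of_real k0 * complex_of_real \<bar>x\<bar>)"
    proof (intro allI impI)
      fix x :: real assume "1 \<le> x"
      then show "\<psi> x = \<alpha> * exp (\<i> * complex_of_real k0 * complex_of_real \<bar>x\<bar>)"
        using zp ae by (cases "x = 1") (auto simp: \<psi>_def \<alpha>_def K_def exp_add[symmetric] algebra_simps)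
    qed
    show "\<forall>x\<le>-1. \<psi> x = \<alpha> * exp (\<i> * complex_of_real k0 * complex_of_real \<bar>x\<bar>)"
    proof (intro allI impI)
      fix x :: real assume "x \<le> -1"
      then show "\<psi> x = \<alpha> * exp (\<i> * complex_of_real k0 * complex_of_real \<bar>x\<bar>)"
        using zm ae by (cases "x = -1") (auto simp: \<psi>_def \<alpha>_def K_def exp_add[symmetric] algebra_simps exp_swap)
    qed
    show "\<psi> 0 \<noteq> 0" using nz by (auto simp: \<psi>_def)
  qed

  have z2c: "continuous_on {-1..1} (\<lambda>x. (z x)^2)" using zc by (intro continuous_intros)
  define Z where "Z = (\<lambda>x. integral {-1..x} (\<lambda>t. (z t)^2))"
  have dZ: "(Z has_vector_derivative (z x)^2) (at x within {-1..1})" if "x \<in> {-1..1}" for x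
    unfolding Z_def by (rule integral_has_vector_derivative[OF z2c that])
  have Zc: "continuous_on {-1..1} Z" by (rule cont_of_der[where f'="\<lambda>x. (z x)^2"]) (use dZ in blast)
  have Zm: "Z (-1) = 0" by (simp add: Z_def)
  have Zp: "Z 1 = 1 / (\<i> * K)" using int by (simp add: Z_def K_def)
  define G where "G = (\<lambda>x. - \<i> - 2 * K * Z x)"
  have Gm: "G (-1) = - \<i>" by (simp add: G_def Zm)
  have Gp: "G 1 = \<i>"
  proof -
    have "2 * K * (1 / (\<i> * K)) = - 2 * \<i>" using K0 by (simp add: field_simps)
    then show ?thesis by (simp add: G_def Zp)
  qed
  have dG: "(G has_vector_derivative (- (2 * K * (z x)^2))) (at x within {-1..1})" if "x \<in> {-1..1}" for x
    unfolding G_def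
    by (rule has_vector_derivative_eq_rhs[OF has_vector_derivative_diff[OF has_vector_derivative_const
          has_vector_derivative_mult_right[OF dZ[OF that]]]]) simp
  define g where "g = (\<lambda>x. G x / (z x)^2)"
  have gc: "continuous_on {-1..1} g"
    unfolding g_def G_def using Zc zc nz by (intro continuous_intros) auto
  define w where "w = (\<lambda>x. integral {-1..x} g)"
  have dw: "(w has_vector_derivative g x) (at x within {-1..1})" if "x \<in> {-1..1}" for x
    unfolding w_def by (rule integral_has_vector_derivative[OF gc that])
  have wm: "w (-1) = 0" by (simp add: w_def)
  define ph where "ph = (\<lambda>x. z x * w x)"
  define ph1 where "ph1 = (\<lambda>x. z1 x * w x + G x * inverse (z x))"
  define ph2 where "ph2 = (\<lambda>x. z2 x * w x - 2 * K * z x)"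
  have dph: "(ph has_vector_derivative ph1 x) (at x within {-1..1})" if x: "x \<in> {-1..1}" for x
  proof -
    have nzx: "z x \<noteq> 0" using nz x by auto
    show ?thesis
      unfolding ph_def
      by (rule has_vector_derivative_eq_rhs[OF has_vector_derivative_mult[OF bspec[OF dz x] dw[OF x]]])
        (use nzx in \<open>simp add: ph1_def g_def field_simps power2_eq_square\<close>)
  qed
  have dph1: "(ph1 has_vector_derivative ph2 x) (at x within {-1..1})" if x: "x \<in> {-1..1}" for x
  proof -
    have nzx: "z x \<noteq> 0" using nz x by auto
    show ?thesis
      unfolding ph1_def
      by (rule has_vector_derivative_eq_rhs[OF has_vector_derivative_add[OF
             has_vector_derivative_mult[OF bspec[OF dz1 x] dw[OF x]]
             has_vector_derivative_mult[OF dG[OF x] dinv[OF bspec[OF dz x] nzx]]]])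
        (use nzx in \<open>simp add: ph2_def g_def field_simps power2_eq_square\<close>)
  qed
  have ph1c: "continuous_on {-1..1} ph1" by (rule cont_of_der[where f'=ph2]) (use dph1 in blast)
  define bp where "bp = (w 1 - \<i>) * \<alpha>"
  define bm where "bm = - \<i> * \<alpha>"
  define phm where "phm = E (- \<i> * \<alpha>) bm (- \<i> * K) 0"
  define php where "php = E (\<i> * \<alpha>) bp (\<i> * K) 0"
  define phm' where "phm' = E' (- \<i> * \<alpha>) bm (- \<i> * K) 0"
  define php' where "php' = E' (\<i> * \<alpha>) bp (\<i> * K) 0"
  define \<phi> where "\<phi> = (\<lambda>x. if x \<le> -1 then phm x else if x \<le> 1 then ph x else php x)"
  define \<phi>1 where "\<phi>1 = (\<lambda>x. if x \<le> -1 then phm' x else if x \<le> 1 then ph1 x else php' x)"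
  have ea: "exp (\<i> * K) * \<alpha> = 1" using ae by (simp add: mult.commute)
  have c1: "phm (-1) = ph (-1)" by (simp add: phm_def E_def ph_def wm bm_def)
  have c2: "phm' (-1) = ph1 (-1)"
    using ea ae by (simp add: phm'_def E'_def ph1_def wm bm_def Gm zm)
  have c3: "ph 1 = php 1"
  proof -
    have "php 1 = w 1 * (\<alpha> * exp (\<i> * K))" by (simp add: php_def E_def bp_def algebra_simps)
    then show ?thesis using ae zp by (simp add: ph_def)
  qed
  have c4: "ph1 1 = php' 1"
  proof -
    have "php' 1 = (\<i> + w 1 * \<i> * K) * (\<alpha> * exp (\<i> * K))" by (simp add: php'_def E'_def bp_def algebra_simps)
    then show ?thesis using ae zp z1p Gp by (simp add: ph1_def K_def algebra_simps)
  qed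
  have part2: "second_order_condition U k0 \<psi> \<alpha> \<alpha>"
    unfolding second_order_condition_def
  proof (intro conjI exI)
    show "\<forall>x. (\<phi> has_vector_derivative \<phi>1 x) (at x)"
      unfolding \<phi>_def \<phi>1_def
      apply (intro allI glue3)
      unfolding phm_def php_def phm'_def php'_def
      apply (rule dE) apply (rule dE) apply (rule dph, assumption)
      using c1 c2 c3 c4 by (simp_all add: phm_def php_def phm'_def php'_def)
    show "continuous_on UNIV \<phi>1"
      unfolding \<phi>1_def
      apply (rule cont3) unfolding phm'_def php'_def apply (rule cE') apply (rule cE') apply (rule ph1c)
      using c2 c4 by (simp_all add: phm'_def php'_def)
    show "\<forall>x\<in>{-1<..<1}. (\<phi>1 has_vector_derivative ph2 x) (at x) \<and>
            - ph2 x + U x * \<phi> x - (complex_of_real k0)\<^sup>2 * \<phi> x = 2 * complex_of_real k0 * \<psi> x"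
    proof
      fix x :: real assume x: "x \<in> {-1<..<1}"
      have nzx: "z x \<noteq> 0" using nz x by auto
      show "(\<phi>1 has_vector_derivative ph2 x) (at x) \<and>
            - ph2 x + U x * \<phi> x - (complex_of_real k0)\<^sup>2 * \<phi> x = 2 * complex_of_real k0 * \<psi> x"
      proof
        show "(\<phi>1 has_vector_derivative ph2 x) (at x)"
          by (rule inner_to_at[where f=ph1]) (use x dph1 in \<open>auto simp: \<phi>1_def\<close>)
        show "- ph2 x + U x * \<phi> x - (complex_of_real k0)\<^sup>2 * \<phi> x = 2 * complex_of_real k0 * \<psi> x"
          using x nzx by (auto simp: U_def \<psi>_def \<phi>_def ph_def ph2_def K_def field_simps)
      qed
    qed
    show "\<forall>x\<ge>1. \<phi> x = (\<i> * \<alpha> * complex_of_real \<bar>x\<bar> + bp) * exp (\<i> * complex_of_real k0 * complex_of_real \<bar>x\<bar>)"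
    proof (intro allI impI)
      fix x :: real assume x: "1 \<le> x"
      have "\<phi> x = php x" using c3 x by (cases "x = 1") (auto simp: \<phi>_def)
      then show "\<phi> x = (\<i> * \<alpha> * complex_of_real \<bar>x\<bar> + bp) * exp (\<i> * complex_of_real k0 * complex_of_real \<bar>x\<bar>)"
        using x by (simp add: php_def E_def K_def algebra_simps)
    qed
    show "\<forall>x\<le>-1. \<phi> x = (\<i> * \<alpha> * complex_of_real \<bar>x\<bar> + bm) * exp (\<i> * complex_of_real k0 * complex_of_real \<bar>x\<bar>)"
    proof (intro allI impI)
      fix x :: real assume x: "x \<le> -1"
      have "\<phi> x = phm x" using x by (simp add: \<phi>_def)
      then show "\<phi> x = (\<i> * \<alpha> * complex_of_real \<bar>x\<bar> + bm) * exp (\<i> * complex_of_real k0 * complex_of_real \<bar>x\<bar>)"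
        using x by (simp add: phm_def E_def K_def algebra_simps)
    qed
  qed
  show ?thesis using part1 part2 by (simp add: \<alpha>_def K_def)
qed

end
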